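(* Let $G$ be connected with weights $w:E\to\mathbb{R}_{>0}$ such that for every pair of vertices $a,b$ there is exactly one shortest $a$–$b$ path in $(G,w)$. Let $\pi$ be a vertex order, let $m_C$ be the output of the basic customization applied to $m_0$, and let $m_P$ be the perfect metric. Let $R$ be the set of edges $\{x,y\}$ of $G_\pi^*$ with $m_P(\{x,y\})\neq m_C(\{x,y\})$. Then (i) for all $s,t\in V$ there is an up-down $s$–$t$ path in $G_\pi^*$ that uses no edge of $R$ and whose $m_C$-length equals $\mathrm{dist}_I(s,t)$; and (ii) for every edge $\{x,y\}\notin R$ of $G_\pi^*$, the one-edge path $x,y$ is the only up-down $x$–$y$ path in $G_\pi^*$ whose $m_C$-length equals $\mathrm{dist}_I(x,y)$.
   Context: Let $G=(V,E)$ be a finite simple undirected graph with $n=|V|$ vertices. A vertex order is a bijection $\pi:\{1,\dots,n\}\to V$; the rank of $v$ is $\pi^{-1}(v)$. Contracting a vertex $v$ in a graph means deleting $v$ and its incident edges and adding an edge between every pair of former neighbors of $v$ that are not already adjacent. The core graph $G_{\pi,i}$ is obtained from $G$ by contracting $\pi(1),\dots,\pi(i-1)$ in this order. $G_\pi^*$ is the graph on $V$ whose edge set is the union of the edge sets of all $G_{\pi,i}$, $i=1,\dots,n$ (i.e. $G$ together with all edges inserted during the contractions). Let $w:E\to\mathbb{R}_{>0}$ and let $\mathrm{dist}_I(s,t)$ be the shortest $s$–$t$ path length in $(G,w)$. A metric is a map $m$ assigning to every edge of $G_\pi^*$ a value in $\mathbb{R}_{>0}\cup\{\infty\}$; the $m$-length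 of a path in $G_\pi^*$ is the sum of $m$ over its edges. An up-down path is a path $v_0,\dots,v_k$ in $G_\pi^*$ for which there is $j$ with the ranks strictly increasing along $v_0,\dots,v_j$ and strictly decreasing along $v_j,\dots,v_k$. The perfect metric is $m_P(\{x,y\})=\mathrm{dist}_I(x,y)$ for every edge $\{x,y\}$ of $G_\pi^*$. The initial metric $m_0$ is $m_0(\{x,y\})=w(\{x,y\})$ if $\{x,y\}\in E$ and $\infty$ otherwise. The basic customization starts from $m:=m_0$ and processes the edges $\{x,y\}$ of $G_\pi^*$ in nondecreasing order of the rank of the lower-ranked endpoint (ties arbitrary); when processing $\{x,y\}$ it sets, for every vertex $z$ of rank smaller than both $x$ and $y$ that is adjacent to both in $G_\pi^*$, $m(\{x,y\}):=\min\{m(\{x,y\}),m(\{x,z\})+m(\{z,y\})\}$ using the current values. Its output is the final metric $m_C$. *)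

theory Defs
  imports Main "HOL-Library.Extended_Real"
begin

definition simple_graph :: "'a set \<Rightarrow> 'a set set \<Rightarrow> bool" where
  "simple_graph V E \<longleftrightarrow> finite V \<and>
     E \<subseteq> {{x, y} | x y. x \<in> V \<and> y \<in> V \<and> x \<noteq> y}"

definition steps :: "'a list \<Rightarrow> ('a \<times> 'a) list" where
  "steps p = zip p (tl p)"

definition is_path :: "'a set \<Rightarrow> 'a set set \<Rightarrow> 'a list \<Rightarrow> bool" where
  "is_path V F p \<longleftrightarrow> p \<noteq> [] \<and> distinct p \<and> set p \<subseteq> V \<and>
     (\<forall>(a, b) \<in> set (steps p). {a, b} \<in> F)"

definition path_from_to :: "'a set \<Rightarrow> 'a set set \<Rightarrow> 'a \<Rightarrow> 'a \<Rightarrow> 'a list \<Rightarrow> bool" where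
  "path_from_to V F s t p \<longleftrightarrow> is_path V F p \<and> hd p = s \<and> last p = t"

definition connected_graph :: "'a set \<Rightarrow> 'a set set \<Rightarrow> bool" where
  "connected_graph V E \<longleftrightarrow> (\<forall>a\<in>V. \<forall>b\<in>V. \<exists>p. path_from_to V E a b p)"

definition wlen :: "('a set \<Rightarrow> real) \<Rightarrow> 'a list \<Rightarrow> real" where
  "wlen w p = sum_list (map (\<lambda>(a, b). w {a, b}) (steps p))"

definition dist_I :: "'a set \<Rightarrow> 'a set set \<Rightarrow> ('a set \<Rightarrow> real) \<Rightarrow> 'a \<Rightarrow> 'a \<Rightarrow> real" where
  "dist_I V E w s t = Inf {wlen w p | p. path_from_to V E s t p}"

definition unique_shortest_paths :: "'a set \<Rightarrow> 'a set set \<Rightarrow> ('a set \<Rightarrow> real) \<Rightarrow> bool" where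
  "unique_shortest_paths V E w \<longleftrightarrow>
     (\<forall>a\<in>V. \<forall>b\<in>V. \<exists>!p. path_from_to V E a b p \<and> wlen w p = dist_I V E w a b)"

definition vertex_order :: "'a set \<Rightarrow> (nat \<Rightarrow> 'a) \<Rightarrow> bool" where
  "vertex_order V \<pi> \<longleftrightarrow> bij_betw \<pi> {1..card V} V"

definition rank :: "'a set \<Rightarrow> (nat \<Rightarrow> 'a) \<Rightarrow> 'a \<Rightarrow> nat" where
  "rank V \<pi> v = inv_into {1..card V} \<pi> v"

text \<open>Contracting v: delete v with its incident edges, and connect all pairs of
former neighbours of v (edge sets only; the vertex set just loses v).\<close>
definition contract :: "'a set set \<Rightarrow> 'a \<Rightarrow> 'a set set" where
  "contract F v = {e \<in> F. v \<notin> e} \<union>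
     {{x, y} | x y. x \<noteq> y \<and> {v, x} \<in> F \<and> {v, y} \<in> F}"

text \<open>core_edges E pi k is the edge set of the core graph G_{pi,k+1}, i.e. after
contracting pi 1, ..., pi k in this order.\<close>
primrec core_edges :: "'a set set \<Rightarrow> (nat \<Rightarrow> 'a) \<Rightarrow> nat \<Rightarrow> 'a set set" where
  "core_edges E \<pi> 0 = E"
| "core_edges E \<pi> (Suc k) = contract (core_edges E \<pi> k) (\<pi> (Suc k))"

definition star_edges :: "'a set \<Rightarrow> 'a set set \<Rightarrow> (nat \<Rightarrow> 'a) \<Rightarrow> 'a set set" where
  "star_edges V E \<pi> = (\<Union>i\<in>{1..card V}. core_edges E \<pi> (i - 1))"

definition up_down_path :: "'a set \<Rightarrow> 'a set set \<Rightarrow> (nat \<Rightarrow> 'a) \<Rightarrow> 'a list \<Rightarrow> bool" where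
  "up_down_path V E \<pi> p \<longleftrightarrow> is_path V (star_edges V E \<pi>) p \<and>
     (\<exists>j < length p.
        (\<forall>i. i < j \<longrightarrow> rank V \<pi> (p ! i) < rank V \<pi> (p ! Suc i)) \<and>
        (\<forall>i. j \<le> i \<longrightarrow> Suc i < length p \<longrightarrow> rank V \<pi> (p ! Suc i) < rank V \<pi> (p ! i)))"

definition mlen :: "('a set \<Rightarrow> ereal) \<Rightarrow> 'a list \<Rightarrow> ereal" where
  "mlen m p = sum_list (map (\<lambda>(a, b). m {a, b}) (steps p))"

definition initial_metric :: "'a set set \<Rightarrow> ('a set \<Rightarrow> real) \<Rightarrow> 'a set \<Rightarrow> ereal" where
  "initial_metric E w e = (if e \<in> E then ereal (w e) else \<infinity>)"

text \<open>Processing one edge {x,y} in the basic customization (the minimum over all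
lower triangles; INF over the empty set is infinity).\<close>
definition cust_step :: "'a set \<Rightarrow> 'a set set \<Rightarrow> (nat \<Rightarrow> 'a) \<Rightarrow>
    ('a set \<Rightarrow> ereal) \<Rightarrow> 'a \<times> 'a \<Rightarrow> ('a set \<Rightarrow> ereal)" where
  "cust_step V E \<pi> m xy = (case xy of (x, y) \<Rightarrow>
     m({x, y} := min (m {x, y})
        (INF z \<in> {z. rank V \<pi> z < rank V \<pi> x \<and> rank V \<pi> z < rank V \<pi> y \<and>
                     {x, z} \<in> star_edges V E \<pi> \<and> {z, y} \<in> star_edges V E \<pi>}.
           m {x, z} + m {z, y})))"

definition cust_order :: "'a set \<Rightarrow> 'a set set \<Rightarrow> (nat \<Rightarrow> 'a) \<Rightarrow> ('a \<times> 'a) list \<Rightarrow> bool" where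
  "cust_order V E \<pi> L \<longleftrightarrow>
     distinct (map (\<lambda>(x, y). {x, y}) L) \<and>
     set (map (\<lambda>(x, y). {x, y}) L) = star_edges V E \<pi> \<and>
     sorted (map (\<lambda>(x, y). min (rank V \<pi> x) (rank V \<pi> y)) L)"

definition basic_customization :: "'a set \<Rightarrow> 'a set set \<Rightarrow> (nat \<Rightarrow> 'a) \<Rightarrow>
    ('a \<times> 'a) list \<Rightarrow> ('a set \<Rightarrow> ereal) \<Rightarrow> ('a set \<Rightarrow> ereal)" where
  "basic_customization V E \<pi> L m = fold (\<lambda>xy m. cust_step V E \<pi> m xy) L m"

definition wrong_edges :: "'a set \<Rightarrow> 'a set set \<Rightarrow> ('a set \<Rightarrow> real) \<Rightarrow> (nat \<Rightarrow> 'a) \<Rightarrow>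
    ('a set \<Rightarrow> ereal) \<Rightarrow> 'a set set" where
  "wrong_edges V E w \<pi> m = {{x, y} | x y. {x, y} \<in> star_edges V E \<pi> \<and>
      ereal (dist_I V E w x y) \<noteq> m {x, y}}"

end

theory Submission
  imports Defs
begin



lemma steps_Nil[simp]: "steps [] = []" by (simp add: steps_def)
lemma steps_single[simp]: "steps [x] = []" by (simp add: steps_def)
lemma steps_Cons2[simp]: "steps (x # y # zs) = (x, y) # steps (y # zs)" by (simp add: steps_def)

lemma steps_append_Cons: "steps (xs @ y # ys) = steps (xs @ [y]) @ steps (y # ys)"
proof (induction xs)
  case Nil then show ?case by simp
next
  case (Cons x xs) then show ?case by (cases xs) auto
qed

lemma steps_snoc: "xs \<noteq> [] \<Longrightarrow> steps (xs @ [y]) = steps xs @ [(last xs, y)]"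
proof (induction xs)
  case Nil then show ?case by simp
next
  case (Cons x xs) then show ?case by (cases xs) auto
qed

lemma steps_rev: "steps (rev xs) = rev (map prod.swap (steps xs))"
proof (induction xs)
  case Nil then show ?case by simp
next
  case (Cons x xs)
  show ?case
  proof (cases xs)
    case Nil then show ?thesis by simp
  next
    case (Cons a l)
    have "steps (rev (x # xs)) = steps (rev xs @ [x])" by simp
    also have "\<dots> = steps (rev xs) @ [(last (rev xs), x)]" using Cons by (intro steps_snoc) simp
    also have "\<dots> = rev (map prod.swap (steps (x # xs)))" using Cons.IH Cons by (simp add: last_rev)
    finally show ?thesis .
  qed
qed

definition walk :: "'a set set \<Rightarrow> 'a list \<Rightarrow> bool" where
  "walk F W \<longleftrightarrow> (\<forall>(a, b)\<in>set (steps W). {a, b} \<in> F)"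

lemma walk_single[simp]: "walk F [x]" by (simp add: walk_def)
lemma walk_Cons2[simp]: "walk F (x # y # zs) \<longleftrightarrow> {x,y} \<in> F \<and> walk F (y # zs)"
  by (simp add: walk_def)
lemma walk_append_Cons: "walk F (xs @ y # ys) \<longleftrightarrow> walk F (xs @ [y]) \<and> walk F (y # ys)"
  unfolding walk_def by (subst steps_append_Cons) auto
lemma walk_rev[simp]: "walk F (rev W) \<longleftrightarrow> walk F W"
  unfolding walk_def steps_rev by (auto simp: insert_commute)

lemma wlen_single[simp]: "wlen w [x] = 0" by (simp add: wlen_def)
lemma wlen_Cons2[simp]: "wlen w (x # y # zs) = w {x,y} + wlen w (y # zs)"
  by (simp add: wlen_def)
lemma wlen_append_Cons: "wlen w (xs @ y # ys) = wlen w (xs @ [y]) + wlen w (y # ys)"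
  unfolding wlen_def by (subst steps_append_Cons) auto
lemma wlen_rev[simp]: "wlen w (rev W) = wlen w W"
  unfolding wlen_def steps_rev by (simp add: rev_map[symmetric] sum_list_rev comp_def insert_commute case_prod_unfold)

lemma mlen_single[simp]: "mlen m [x] = 0" by (simp add: mlen_def)
lemma mlen_Cons2[simp]: "mlen m (x # y # zs) = m {x,y} + mlen m (y # zs)"
  by (simp add: mlen_def)
lemma mlen_append_Cons: "mlen m (xs @ y # ys) = mlen m (xs @ [y]) + mlen m (y # ys)"
  unfolding mlen_def by (subst steps_append_Cons) auto
lemma mlen_rev[simp]: "mlen m (rev W) = mlen m W"
  unfolding mlen_def steps_rev by (simp add: rev_map[symmetric] sum_list_rev comp_def insert_commute case_prod_unfold)
lemma mlen_snoc: "xs \<noteq> [] \<Longrightarrow> mlen m (xs @ [y]) = mlen m xs + m {last xs, y}"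
  unfolding mlen_def by (simp add: steps_snoc)

lemma walk_wlen_nonneg: "\<forall>e\<in>F. w e > 0 \<Longrightarrow> walk F W \<Longrightarrow> wlen w W \<ge> 0"
proof (induction W rule: induct_list012)
  case (3 x y zs) then show ?case by (simp add: add_nonneg_nonneg less_imp_le)
qed (auto simp: wlen_def)

lemma walk_wlen_pos: "\<forall>e\<in>F. w e > 0 \<Longrightarrow> walk F W \<Longrightarrow> length W \<ge> 2 \<Longrightarrow> wlen w W > 0"
proof (induction W rule: induct_list012)
  case (3 x y zs) then show ?case using walk_wlen_nonneg[of F w "y # zs"]
    by (simp add: add_pos_nonneg)
qed auto

lemma mlen_nonneg: "(\<forall>e. m e \<ge> 0) \<Longrightarrow> mlen m p \<ge> 0"
  unfolding mlen_def by (rule sum_list_nonneg) auto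

lemma INF_attain:
  fixes f :: "'b \<Rightarrow> ereal"
  assumes "finite A" "A \<noteq> {}" shows "\<exists>z\<in>A. (INF x\<in>A. f x) = f z"
  using assms
proof (induction A rule: finite_ne_induct)
  case (singleton x) then show ?case by simp
next
  case (insert x F)
  then obtain z where "z \<in> F" "(INF x\<in>F. f x) = f z" by blast
  then show ?case by (auto simp: inf_min min_def)
qed




locale cch =
  fixes V :: "'a set" and E :: "'a set set" and w :: "'a set \<Rightarrow> real"
    and \<pi> :: "nat \<Rightarrow> 'a" and L :: "('a \<times> 'a) list"
  assumes sg: "simple_graph V E"
    and wpos: "\<forall>e\<in>E. w e > 0"
    and usp: "unique_shortest_paths V E w"
    and vo: "vertex_order V \<pi>"
    and co: "cust_order V E \<pi> L"
begin

abbreviation "rk \<equiv> rank V \<pi>"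
abbreviation "S \<equiv> star_edges V E \<pi>"
abbreviation "dI \<equiv> dist_I V E w"

lemma finV: "finite V" using sg by (simp add: simple_graph_def)
lemma E_pairs: "e \<in> E \<Longrightarrow> \<exists>x y. e = {x,y} \<and> x \<in> V \<and> y \<in> V \<and> x \<noteq> y"
  using sg unfolding simple_graph_def by blast
lemma bij: "bij_betw \<pi> {1..card V} V" using vo unfolding vertex_order_def by simp
lemma rank_in: "v \<in> V \<Longrightarrow> rk v \<in> {1..card V}"
  unfolding rank_def using bij by (metis bij_betw_def inv_into_into)
lemma pi_rank: "v \<in> V \<Longrightarrow> \<pi> (rk v) = v"
  unfolding rank_def using bij by (metis bij_betw_def f_inv_into_f)
lemma rank_inj: "u \<in> V \<Longrightarrow> v \<in> V \<Longrightarrow> rk u = rk v \<Longrightarrow> u = v" using pi_rank by metis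
lemma rank_pi: "k \<in> {1..card V} \<Longrightarrow> rk (\<pi> k) = k"
  unfolding rank_def using bij by (metis bij_betw_def inv_into_f_f)
lemma pi_in: "k \<in> {1..card V} \<Longrightarrow> \<pi> k \<in> V"
  using bij by (metis bij_betw_apply)

lemma core_pairs: "e \<in> core_edges E \<pi> k \<Longrightarrow> \<exists>x y. e = {x,y} \<and> x \<in> V \<and> y \<in> V \<and> x \<noteq> y"
proof (induction k arbitrary: e)
  case 0 then show ?case using E_pairs by simp
next
  case (Suc k)
  let ?v = "\<pi> (Suc k)"
  from Suc.prems consider "e \<in> core_edges E \<pi> k"
    | x y where "e = {x,y}" "x \<noteq> y" "{?v,x} \<in> core_edges E \<pi> k" "{?v,y} \<in> core_edges E \<pi> k"
    unfolding core_edges.simps contract_def by blast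
  then show ?case
  proof cases
    case 1 then show ?thesis using Suc.IH by blast
  next
    case 2
    from Suc.IH[OF 2(3)] have "x \<in> V" by (metis doubleton_eq_iff)
    moreover from Suc.IH[OF 2(4)] have "y \<in> V" by (metis doubleton_eq_iff)
    ultimately show ?thesis using 2 by blast
  qed
qed

lemma star_pairs: "e \<in> S \<Longrightarrow> \<exists>x y. e = {x,y} \<and> x \<in> V \<and> y \<in> V \<and> x \<noteq> y"
  unfolding star_edges_def using core_pairs by blast

lemma star_pairsD: "{x,y} \<in> S \<Longrightarrow> x \<in> V \<and> y \<in> V \<and> x \<noteq> y"
  using star_pairs by (metis doubleton_eq_iff)

lemma coreA:
  "\<forall>a b I. a \<in> V \<longrightarrow> b \<in> V \<longrightarrow> set I \<subseteq> V \<longrightarrow> a \<noteq> b \<longrightarrow> walk E (a # I @ [b]) \<longrightarrow>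
     k < rk a \<longrightarrow> k < rk b \<longrightarrow> (\<forall>u\<in>set I. rk u \<le> k) \<longrightarrow> {a,b} \<in> core_edges E \<pi> k"
proof (induction k)
  case 0
  show ?case
  proof (intro allI impI)
    fix a b I assume h: "a \<in> V" "b \<in> V" "set I \<subseteq> V" "a \<noteq> b" "walk E (a # I @ [b])"
      "0 < rk a" "0 < rk b" "\<forall>u\<in>set I. rk u \<le> 0"
    have "I = []"
    proof (rule ccontr)
      assume "I \<noteq> []" then obtain u where "u \<in> set I" by (cases I) auto
      then show False using h(3,8) rank_in by fastforce
    qed
    then show "{a,b} \<in> core_edges E \<pi> 0" using h by simp
  qed
next
  case (Suc k)
  show ?case
  proof (intro allI impI)
    fix a b I assume h: "a \<in> V" "b \<in> V" "set I \<subseteq> V" "a \<noteq> b" "walk E (a # I @ [b])"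
      "Suc k < rk a" "Suc k < rk b" "\<forall>u\<in>set I. rk u \<le> Suc k"
    let ?v = "\<pi> (Suc k)"
    have kin: "Suc k \<in> {1..card V}" using h(1,6) rank_in[of a] by auto
    have vV: "?v \<in> V" using pi_in[OF kin] .
    have rv: "rk ?v = Suc k" using rank_pi[OF kin] .
    have va: "?v \<noteq> a" "?v \<noteq> b" using rv h(6,7) by auto
    show "{a,b} \<in> core_edges E \<pi> (Suc k)"
    proof (cases "?v \<in> set I")
      case False
      have "\<forall>u\<in>set I. rk u \<le> k"
      proof
        fix u assume u: "u \<in> set I"
        have "rk u \<noteq> Suc k" using rank_inj[of u ?v] u h(3) vV rv False by auto
        then show "rk u \<le> k" using h(8) u by fastforce
      qed
      then have "{a,b} \<in> core_edges E \<pi> k" using Suc.IH h by auto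
      then show ?thesis using va by (simp add: contract_def)
    next
      case True
      obtain I1 I2 where I1: "I = I1 @ ?v # I2" "?v \<notin> set I1" using split_list_first[OF True] by blast
      obtain J1 J2 where J1: "I = J1 @ ?v # J2" "?v \<notin> set J2" using split_list_last[OF True] by blast
      have w1: "walk E (a # I1 @ [?v])"
        using h(5) I1(1) walk_append_Cons[of E "a # I1" ?v "I2 @ [b]"] by simp
      have w2: "walk E (?v # J2 @ [b])"
        using h(5) J1(1) walk_append_Cons[of E "a # J1" ?v "J2 @ [b]"] by simp
      have r1: "\<forall>u\<in>set I1. rk u \<le> k"
      proof
        fix u assume u: "u \<in> set I1"
        have "rk u \<noteq> Suc k" using rank_inj[of u ?v] u h(3) vV rv I1 by auto
        moreover have "rk u \<le> Suc k" using h(8) u I1(1) by auto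
        ultimately show "rk u \<le> k" by simp
      qed
      have r2: "\<forall>u\<in>set J2. rk u \<le> k"
      proof
        fix u assume u: "u \<in> set J2"
        have "rk u \<noteq> Suc k" using rank_inj[of u ?v] u h(3) vV rv J1 by auto
        moreover have "rk u \<le> Suc k" using h(8) u J1(1) by auto
        ultimately show "rk u \<le> k" by simp
      qed
      have "{a,?v} \<in> core_edges E \<pi> k"
        using Suc.IH h I1 w1 r1 vV va rv by auto
      moreover have "{?v,b} \<in> core_edges E \<pi> k"
        using Suc.IH h J1 w2 r2 vV va rv by auto
      ultimately show ?thesis using h(4) unfolding core_edges.simps contract_def
        by (auto simp: insert_commute)
    qed
  qed
qed

lemma starA:
  assumes "a \<in> V" "b \<in> V" "set I \<subseteq> V" "a \<noteq> b" "walk E (a # I @ [b])"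
    "\<forall>u\<in>set I. rk u < rk a \<and> rk u < rk b"
  shows "{a,b} \<in> S"
proof -
  let ?i = "min (rk a) (rk b)"
  have i: "?i \<in> {1..card V}" using rank_in[OF assms(1)] rank_in[OF assms(2)] by (auto simp: min_def)
  have "{a,b} \<in> core_edges E \<pi> (?i - 1)"
    using coreA[of "?i - 1"] assms i by fastforce
  then show ?thesis unfolding star_edges_def using i by blast
qed

end



context cch
begin

lemma path_iff: "path_from_to V E s t P \<longleftrightarrow> P \<noteq> [] \<and> distinct P \<and> set P \<subseteq> V \<and> walk E P \<and> hd P = s \<and> last P = t"
  unfolding path_from_to_def is_path_def walk_def by blast

lemma shorten_strict:
  assumes "walk E W" "\<not> distinct W"
  shows "\<exists>W'. W' \<noteq> [] \<and> walk E W' \<and> set W' \<subseteq> set W \<and> hd W' = hd W \<and> last W' = last W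
     \<and> wlen w W' < wlen w W \<and> length W' < length W"
proof -
  obtain xs y ys zs where W: "W = xs @ [y] @ ys @ [y] @ zs" using not_distinct_decomp[OF assms(2)] by blast
  let ?W' = "xs @ y # zs"
  have e1: "W = xs @ y # (ys @ y # zs)" using W by simp
  have e2: "y # ys @ y # zs = (y # ys) @ y # zs" by simp
  have wW: "walk E (xs @ [y]) \<and> walk E (y # ys @ [y]) \<and> walk E (y # zs)"
    using assms(1) walk_append_Cons[of E xs y "ys @ y # zs"] walk_append_Cons[of E "y # ys" y zs] e1 by simp
  have lW: "wlen w W = wlen w (xs @ [y]) + wlen w (y # ys @ [y]) + wlen w (y # zs)"
    using wlen_append_Cons[of w xs y "ys @ y # zs"] wlen_append_Cons[of w "y # ys" y zs] e1 by simp
  have "wlen w (y # ys @ [y]) > 0"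
    using walk_wlen_pos[OF wpos] wW by simp
  then have "wlen w ?W' < wlen w W" using lW wlen_append_Cons[of w xs y zs] by simp
  moreover have "walk E ?W'" using wW walk_append_Cons[of E xs y zs] by simp
  moreover have "hd ?W' = hd W" "last ?W' = last W" using W by (cases xs; simp)+
  ultimately show ?thesis using W by auto
qed

lemma shorten:
  "walk E W \<Longrightarrow> W \<noteq> [] \<Longrightarrow> \<exists>P. P \<noteq> [] \<and> distinct P \<and> walk E P \<and> set P \<subseteq> set W \<and> hd P = hd W \<and> last P = last W
     \<and> wlen w P \<le> wlen w W"
proof (induction "length W" arbitrary: W rule: less_induct)
  case less
  show ?case
  proof (cases "distinct W")
    case True then show ?thesis using less.prems by blast
  next
    case False
    from shorten_strict[OF less.prems(1) False] obtain W' where W': "W' \<noteq> []" "walk E W'"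
      "set W' \<subseteq> set W" "hd W' = hd W" "last W' = last W" "wlen w W' < wlen w W" "length W' < length W"
      by blast
    from less.hyps[OF W'(7) W'(2) W'(1)] obtain P where "P \<noteq> [] \<and> distinct P \<and> walk E P \<and> set P \<subseteq> set W' \<and> hd P = hd W' \<and> last P = last W'
     \<and> wlen w P \<le> wlen w W'" by blast
    then show ?thesis using W' by (metis order.trans less_imp_le)
  qed
qed

lemma D1:
  assumes "walk E W" "set W \<subseteq> V" "W \<noteq> []"
  shows "dI (hd W) (last W) \<le> wlen w W"
proof -
  from shorten[OF assms(1,3)] obtain P where P: "P \<noteq> [] \<and> distinct P \<and> walk E P \<and> set P \<subseteq> set W \<and> hd P = hd W \<and> last P = last W
     \<and> wlen w P \<le> wlen w W" by blast
  then have "path_from_to V E (hd W) (last W) P" using assms(2) path_iff by auto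
  then have "wlen w P \<in> {wlen w p | p. path_from_to V E (hd W) (last W) p}" by blast
  moreover have "bdd_below {wlen w p | p. path_from_to V E (hd W) (last W) p}"
    by (rule bdd_belowI[of _ 0]) (auto simp: path_iff intro: walk_wlen_nonneg[OF wpos])
  ultimately have "dI (hd W) (last W) \<le> wlen w P" unfolding dist_I_def by (rule cInf_lower)
  then show ?thesis using P by linarith
qed

lemma distW:
  assumes "walk E W" "set W \<subseteq> V" "W \<noteq> []" "wlen w W = dI (hd W) (last W)"
  shows "distinct W"
proof (rule ccontr)
  assume "\<not> distinct W"
  from shorten_strict[OF assms(1) this] obtain W' where W': "W' \<noteq> []" "walk E W'"
      "set W' \<subseteq> set W" "hd W' = hd W" "last W' = last W" "wlen w W' < wlen w W" by blast
  have "dI (hd W') (last W') \<le> wlen w W'" using D1 W' assms(2) by blast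
  then show False using W' assms(4) by simp
qed

lemma exists_sp: "s \<in> V \<Longrightarrow> t \<in> V \<Longrightarrow> \<exists>P. path_from_to V E s t P \<and> wlen w P = dI s t"
  using usp unfolding unique_shortest_paths_def by blast

lemma path_rev: "path_from_to V E s t P \<Longrightarrow> path_from_to V E t s (rev P)"
  unfolding path_iff by (auto simp: hd_rev last_rev)

lemma dist_sym: "dI s t = dI t s"
proof -
  have "{wlen w p | p. path_from_to V E s t p} = {wlen w p | p. path_from_to V E t s p}"
  proof (intro equalityI subsetI)
    fix x assume "x \<in> {wlen w p | p. path_from_to V E s t p}"
    then obtain p where "x = wlen w p" "path_from_to V E s t p" by blast
    then have "x = wlen w (rev p)" "path_from_to V E t s (rev p)" using path_rev by auto
    then show "x \<in> {wlen w p | p. path_from_to V E t s p}" by blast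
  next
    fix x assume "x \<in> {wlen w p | p. path_from_to V E t s p}"
    then obtain p where "x = wlen w p" "path_from_to V E t s p" by blast
    then have "x = wlen w (rev p)" "path_from_to V E s t (rev p)" using path_rev by auto
    then show "x \<in> {wlen w p | p. path_from_to V E s t p}" by blast
  qed
  then show ?thesis unfolding dist_I_def by simp
qed

lemma D3:
  assumes P: "path_from_to V E s t (A @ g # B)" and sh: "wlen w (A @ g # B) = dI s t"
  shows "wlen w (A @ [g]) = dI s g \<and> wlen w (g # B) = dI g t"
proof -
  have Pp: "A @ g # B \<noteq> []" "distinct (A @ g # B)" "set (A @ g # B) \<subseteq> V" "walk E (A @ g # B)"
    "hd (A @ g # B) = s" "last (A @ g # B) = t" using P path_iff by blast+
  have wA: "walk E (A @ [g])" "walk E (g # B)" using Pp(4) walk_append_Cons[of E A g B] by blast+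
  have hs: "hd (A @ [g]) = s" using Pp(5) by (cases A) auto
  have lt: "last (g # B) = t" using Pp(6) by (cases B) auto
  have sV: "s \<in> V" "t \<in> V" "g \<in> V" using Pp(1,3,5,6) hd_in_set[of "A @ g # B"] last_in_set[of "A @ g # B"] by auto
  have spl: "wlen w (A @ g # B) = wlen w (A @ [g]) + wlen w (g # B)" by (rule wlen_append_Cons)
  have d1: "dI s g \<le> wlen w (A @ [g])" using D1[of "A @ [g]"] wA Pp(3) hs by auto
  have d2: "dI g t \<le> wlen w (g # B)" using D1[of "g # B"] wA Pp(3) lt by auto
  have "\<not> dI s g < wlen w (A @ [g])"
  proof
    assume lt1: "dI s g < wlen w (A @ [g])"
    obtain P1 where P1: "path_from_to V E s g P1" "wlen w P1 = dI s g" using exists_sp sV by blast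
    have P1p: "P1 \<noteq> []" "set P1 \<subseteq> V" "walk E P1" "hd P1 = s" "last P1 = g" using P1 path_iff by blast+
    define P1' where "P1' = butlast P1"
    have P1e: "P1 = P1' @ [g]" using P1p(1,5) unfolding P1'_def by (metis append_butlast_last_id)
    let ?W = "P1' @ g # B"
    have "walk E ?W" using P1p(3) wA(2) P1e walk_append_Cons[of E P1' g B] by simp
    moreover have "set ?W \<subseteq> V" using P1p(2) Pp(3) P1e by auto
    moreover have "hd ?W = s" using P1p(4) P1e by (cases P1') auto
    moreover have "last ?W = t" using lt by simp
    ultimately have "dI s t \<le> wlen w ?W" using D1[of ?W] by auto
    moreover have "wlen w ?W = wlen w P1 + wlen w (g # B)" using P1e wlen_append_Cons[of w P1' g B] by simp
    ultimately show False using lt1 P1(2) spl sh by linarith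
  qed
  moreover have "\<not> dI g t < wlen w (g # B)"
  proof
    assume lt1: "dI g t < wlen w (g # B)"
    obtain P2 where P2: "path_from_to V E g t P2" "wlen w P2 = dI g t" using exists_sp sV by blast
    have P2p: "P2 \<noteq> []" "set P2 \<subseteq> V" "walk E P2" "hd P2 = g" "last P2 = t" using P2 path_iff by blast+
    define P2' where "P2' = tl P2"
    have P2e: "P2 = g # P2'" using P2p(1,4) unfolding P2'_def by (metis list.collapse)
    let ?W = "A @ g # P2'"
    have "walk E ?W" using P2p(3) wA(1) P2e walk_append_Cons[of E A g P2'] by simp
    moreover have "set ?W \<subseteq> V" using P2p(2) Pp(3) P2e by auto
    moreover have "hd ?W = s" using hs by (cases A) auto
    moreover have "last ?W = t" using P2p(5) P2e by (cases P2') auto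
    ultimately have "dI s t \<le> wlen w ?W" using D1[of ?W] by auto
    moreover have "wlen w ?W = wlen w (A @ [g]) + wlen w P2" using P2e wlen_append_Cons[of w A g P2'] by simp
    ultimately show False using lt1 P2(2) spl sh by linarith
  qed
  ultimately show ?thesis using d1 d2 by linarith
qed

end



context cch
begin

definition ms :: "nat \<Rightarrow> 'a set \<Rightarrow> ereal" where
  "ms i = basic_customization V E \<pi> (take i L) (initial_metric E w)"

abbreviation "mF \<equiv> ms (length L)"

lemma ms_0: "ms 0 = initial_metric E w" by (simp add: ms_def basic_customization_def)

lemma ms_Suc: "i < length L \<Longrightarrow> ms (Suc i) = cust_step V E \<pi> (ms i) (L ! i)"
  unfolding ms_def basic_customization_def by (simp add: take_Suc_conv_app_nth)

lemma co_dist: "distinct (map (\<lambda>(x, y). {x, y}) L)" using co cust_order_def by blast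
lemma co_set: "set (map (\<lambda>(x, y). {x, y}) L) = S" using co cust_order_def by blast
lemma co_sorted: "sorted (map (\<lambda>(x, y). min (rk x) (rk y)) L)" using co cust_order_def by blast

lemma cs_other: "e \<noteq> {x,y} \<Longrightarrow> cust_step V E \<pi> m (x,y) e = m e"
  by (simp add: cust_step_def)
lemma cs_le: "cust_step V E \<pi> m (x,y) e \<le> m e"
  by (simp add: cust_step_def)
lemma cs_val: "cust_step V E \<pi> m (x,y) {x,y} = min (m {x, y})
        (INF z \<in> {z. rk z < rk x \<and> rk z < rk y \<and>
                     {x, z} \<in> S \<and> {z, y} \<in> S}. m {x, z} + m {z, y})"
  by (simp add: cust_step_def)

lemma cs_tri: "rk z < rk x \<Longrightarrow> rk z < rk y \<Longrightarrow> {x,z} \<in> S \<Longrightarrow> {z,y} \<in> S \<Longrightarrow>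
  cust_step V E \<pi> m (x,y) {x,y} \<le> m {x,z} + m {z,y}"
  unfolding cs_val by (rule min.coboundedI2) (rule INF_lower, simp)

lemma ms_step_le: "i < length L \<Longrightarrow> ms (Suc i) e \<le> ms i e"
proof -
  assume i: "i < length L"
  obtain x y where "L ! i = (x,y)" by (cases "L ! i")
  then show ?thesis using ms_Suc[OF i] cs_le by simp
qed

lemma ms_mono: "i \<le> j \<Longrightarrow> j \<le> length L \<Longrightarrow> ms j e \<le> ms i e"
proof (induction j)
  case 0 then show ?case by simp
next
  case (Suc j)
  show ?case
  proof (cases "i = Suc j")
    case False
    then have "ms j e \<le> ms i e" using Suc by auto
    moreover have "ms (Suc j) e \<le> ms j e" using ms_step_le Suc.prems by auto
    ultimately show ?thesis by simp
  qed simp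
qed

lemma edge_nth: "i < length L \<Longrightarrow> L ! i = (x,y) \<Longrightarrow> {x,y} \<in> S"
proof -
  assume "i < length L" "L ! i = (x,y)"
  then have "map (\<lambda>(x, y). {x, y}) L ! i \<in> set (map (\<lambda>(x, y). {x, y}) L)" by (intro nth_mem) simp
  then show ?thesis using co_set \<open>i < length L\<close> \<open>L ! i = (x,y)\<close> by simp
qed

lemma ms_stable: "i < length L \<Longrightarrow> L ! i = (x,y) \<Longrightarrow> Suc i \<le> j \<Longrightarrow> j \<le> length L \<Longrightarrow>
   ms j {x,y} = ms (Suc i) {x,y}"
proof (induction j)
  case 0 then show ?case by simp
next
  case (Suc j)
  show ?case
  proof (cases "Suc i = Suc j")
    case False
    then have ij: "Suc i \<le> j" "j < length L" using Suc.prems by auto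
    have IH: "ms j {x,y} = ms (Suc i) {x,y}" using Suc.IH[OF Suc.prems(1,2) ij(1)] ij(2) by simp
    obtain x' y' where L': "L ! j = (x',y')" by (cases "L ! j")
    have "j \<noteq> i" using ij by simp
    have "map (\<lambda>(x, y). {x, y}) L ! j \<noteq> map (\<lambda>(x, y). {x, y}) L ! i"
      using co_dist Suc.prems(1) ij(2) \<open>j \<noteq> i\<close> unfolding distinct_conv_nth by simp
    then have "{x,y} \<noteq> {x',y'}" using L' Suc.prems(1,2) ij(2) by simp
    then have "ms (Suc j) {x,y} = ms j {x,y}" using ms_Suc[OF ij(2)] L' cs_other by simp
    then show ?thesis using IH by simp
  qed simp
qed

lemma S_index: "e \<in> S \<Longrightarrow> \<exists>i x y. i < length L \<and> L ! i = (x,y) \<and> e = {x,y}"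
proof -
  assume "e \<in> S"
  then have "e \<in> set (map (\<lambda>(x, y). {x, y}) L)" using co_set by simp
  then obtain i where "i < length L" "map (\<lambda>(x, y). {x, y}) L ! i = e" unfolding in_set_conv_nth by auto
  moreover obtain x y where "L ! i = (x,y)" by (cases "L ! i")
  ultimately show ?thesis by auto
qed

lemma final_before:
  assumes "i < length L" "L ! i = (x,y)" "{c,d} \<in> S" "min (rk c) (rk d) < min (rk x) (rk y)"
  shows "ms i {c,d} = mF {c,d}"
proof -
  obtain i' x' y' where i': "i' < length L" "L ! i' = (x',y')" "{c,d} = {x',y'}" using S_index assms(3) by blast
  have key: "min (rk x') (rk y') = min (rk c) (rk d)" using i'(3) by (auto simp: doubleton_eq_iff)
  have "i' < i"
  proof (rule ccontr)
    assume "\<not> i' < i"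
    then have "map (\<lambda>(x, y). min (rk x) (rk y)) L ! i \<le> map (\<lambda>(x, y). min (rk x) (rk y)) L ! i'"
      using co_sorted i'(1) by (intro sorted_nth_mono) auto
    then have "min (rk x) (rk y) \<le> min (rk c) (rk d)" using assms(1,2) i'(1,2) key by simp
    then show False using assms(4) leD by blast
  qed
  then have "ms i {x',y'} = ms (Suc i') {x',y'}"
    using ms_stable[OF i'(1,2), of i] assms(1) by simp
  moreover have "mF {x',y'} = ms (Suc i') {x',y'}"
    using ms_stable[OF i'(1,2), of "length L"] i'(1) by simp
  ultimately have "ms i {x',y'} = mF {x',y'}" by simp
  then show ?thesis using i'(3) by simp
qed

lemma ms_nonneg: "i \<le> length L \<Longrightarrow> ms i e \<ge> 0"
proof (induction i arbitrary: e)
  case 0 then show ?case using wpos by (simp add: ms_0 initial_metric_def less_imp_le)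
next
  case (Suc i)
  obtain x y where L: "L ! i = (x,y)" by (cases "L ! i")
  have "i < length L" using Suc by simp
  show ?case
  proof (cases "e = {x,y}")
    case True
    have "0 \<le> (INF z \<in> {z. rk z < rk x \<and> rk z < rk y \<and> {x, z} \<in> S \<and> {z, y} \<in> S}. ms i {x, z} + ms i {z, y})"
      using Suc.IH \<open>i < length L\<close> by (intro INF_greatest) (simp add: add_nonneg_nonneg)
    then show ?thesis using True ms_Suc[OF \<open>i < length L\<close>] L cs_val Suc.IH \<open>i < length L\<close> by simp
  next
    case False
    then show ?thesis using ms_Suc[OF \<open>i < length L\<close>] L cs_other Suc by simp
  qed
qed

definition wit :: "('a set \<Rightarrow> ereal) \<Rightarrow> 'a \<Rightarrow> 'a \<Rightarrow> bool" where
  "wit m x y \<longleftrightarrow> (\<exists>I. walk E (x # I @ [y]) \<and> set I \<subseteq> V \<and> (\<forall>u\<in>set I. rk u < rk x \<and> rk u < rk y)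
     \<and> m {x,y} = ereal (wlen w (x # I @ [y])))"

lemma wit_sym: "wit m x y \<Longrightarrow> wit m y x"
proof -
  assume "wit m x y"
  then obtain I where I: "walk E (x # I @ [y])" "set I \<subseteq> V" "\<forall>u\<in>set I. rk u < rk x \<and> rk u < rk y"
     "m {x,y} = ereal (wlen w (x # I @ [y]))" unfolding wit_def by blast
  have r: "rev (x # I @ [y]) = y # rev I @ [x]" by simp
  have "walk E (y # rev I @ [x])" using I(1) walk_rev[of E "x # I @ [y]"] r by simp
  moreover have "wlen w (y # rev I @ [x]) = wlen w (x # I @ [y])" using wlen_rev[of w "x # I @ [y]"] r by simp
  ultimately show ?thesis unfolding wit_def using I by (intro exI[of _ "rev I"]) (auto simp: insert_commute)
qed

lemma wit_cong: "wit m x y \<Longrightarrow> m' {x,y} = m {x,y} \<Longrightarrow> wit m' x y"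
  unfolding wit_def by simp

lemma Z_fin: "finite {z. rk z < rk x \<and> rk z < rk y \<and> {x, z} \<in> S \<and> {z, y} \<in> S}"
proof (rule finite_subset[OF _ finV])
  show "{z. rk z < rk x \<and> rk z < rk y \<and> {x, z} \<in> S \<and> {z, y} \<in> S} \<subseteq> V"
    using star_pairsD by blast
qed

lemma inv: "i \<le> length L \<Longrightarrow> x \<in> V \<Longrightarrow> y \<in> V \<Longrightarrow> x \<noteq> y \<Longrightarrow> ms i {x,y} \<noteq> \<infinity> \<Longrightarrow> wit (ms i) x y"
proof (induction i arbitrary: x y)
  case 0
  then have "{x,y} \<in> E" by (simp add: ms_0 initial_metric_def split: if_splits)
  then show ?case unfolding wit_def using 0 by (intro exI[of _ "[]"]) (simp add: ms_0 initial_metric_def)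
next
  case (Suc i)
  obtain p q where L: "L ! i = (p,q)" by (cases "L ! i")
  have il: "i < length L" using Suc by simp
  show ?case
  proof (cases "{x,y} = {p,q}")
    case False
    then have eq: "ms (Suc i) {x,y} = ms i {x,y}" using ms_Suc[OF il] L cs_other by simp
    have "wit (ms i) x y" using Suc.IH[of x y] Suc.prems il eq by simp
    then show ?thesis using wit_cong[of "ms i" x y "ms (Suc i)"] eq by blast
  next
    case True
    have pq: "p \<in> V" "q \<in> V" "p \<noteq> q" using True Suc.prems by (auto simp: doubleton_eq_iff)
    let ?Z = "{z. rk z < rk p \<and> rk z < rk q \<and> {p, z} \<in> S \<and> {z, q} \<in> S}"
    let ?f = "\<lambda>z. ms i {p, z} + ms i {z, q}"
    have val: "ms (Suc i) {p,q} = min (ms i {p,q}) (INF z\<in>?Z. ?f z)"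
      using ms_Suc[OF il] L cs_val by simp
    have fin: "ms (Suc i) {p,q} \<noteq> \<infinity>" using True Suc.prems by simp
    have "wit (ms (Suc i)) p q"
    proof (cases "ms i {p,q} \<le> (INF z\<in>?Z. ?f z)")
      case True
      then have eq: "ms (Suc i) {p,q} = ms i {p,q}" using val by simp
      have "wit (ms i) p q" using Suc.IH[of p q] pq il fin eq by simp
      then show ?thesis using wit_cong[of "ms i" p q "ms (Suc i)"] eq by blast
    next
      case False
      then have eq: "ms (Suc i) {p,q} = (INF z\<in>?Z. ?f z)" using val by simp
      have ne: "?Z \<noteq> {}"
      proof
        assume "?Z = {}"
        then have "(INF z\<in>?Z. ?f z) = top" by (simp only: INF_empty)
        then have "(INF z\<in>?Z. ?f z) = \<infinity>" by (simp add: top_ereal_def)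
        then show False using eq fin by simp
      qed
      obtain z where z: "z \<in> ?Z" "(INF z\<in>?Z. ?f z) = ?f z" using INF_attain[OF Z_fin ne] by blast
      have zV: "z \<in> V" and zp: "z \<noteq> p" and zq: "z \<noteq> q" using z(1) star_pairsD by auto
      have nn: "ms i {p,z} \<ge> 0" "ms i {z,q} \<ge> 0" using ms_nonneg il by auto
      have "?f z \<noteq> \<infinity>" using z(2) eq fin by simp
      then have f1: "ms i {p,z} \<noteq> \<infinity>" "ms i {z,q} \<noteq> \<infinity>" using nn by auto
      obtain I1 where I1: "walk E (p # I1 @ [z])" "set I1 \<subseteq> V" "\<forall>u\<in>set I1. rk u < rk p \<and> rk u < rk z"
        "ms i {p,z} = ereal (wlen w (p # I1 @ [z]))"
        using Suc.IH[of p z] pq zV zp f1 il unfolding wit_def by auto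
      obtain I2 where I2: "walk E (z # I2 @ [q])" "set I2 \<subseteq> V" "\<forall>u\<in>set I2. rk u < rk z \<and> rk u < rk q"
        "ms i {z,q} = ereal (wlen w (z # I2 @ [q]))"
        using Suc.IH[of z q] pq zV zq f1 il unfolding wit_def by auto
      let ?I = "I1 @ z # I2"
      have e: "p # ?I @ [q] = (p # I1) @ z # (I2 @ [q])" by simp
      have "walk E (p # ?I @ [q])" unfolding e using I1(1) I2(1) walk_append_Cons[of E "p # I1" z "I2 @ [q]"] by simp
      moreover have "wlen w (p # ?I @ [q]) = wlen w (p # I1 @ [z]) + wlen w (z # I2 @ [q])"
        unfolding e using wlen_append_Cons[of w "p # I1" z "I2 @ [q]"] by simp
      moreover have "\<forall>u\<in>set ?I. rk u < rk p \<and> rk u < rk q" using I1(3) I2(3) z(1) by fastforce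
      moreover have "set ?I \<subseteq> V" using I1 I2 zV by auto
      ultimately show ?thesis unfolding wit_def using eq z(2) I1(4) I2(4) by (intro exI[of _ ?I]) auto
    qed
    then have "wit (ms (Suc i)) q p" by (rule wit_sym)
    then show ?thesis using \<open>wit (ms (Suc i)) p q\<close> True by (auto simp: doubleton_eq_iff)
  qed
qed

lemma lower: "x \<in> V \<Longrightarrow> y \<in> V \<Longrightarrow> x \<noteq> y \<Longrightarrow> ereal (dI x y) \<le> mF {x,y}"
proof (cases "mF {x,y} = \<infinity>")
  case False
  assume h: "x \<in> V" "y \<in> V" "x \<noteq> y"
  then obtain I where I: "walk E (x # I @ [y])" "set I \<subseteq> V"
     "mF {x,y} = ereal (wlen w (x # I @ [y]))" using inv[OF le_refl h False] unfolding wit_def by blast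
  have "dI x y \<le> wlen w (x # I @ [y])" using D1[of "x # I @ [y]"] I h by auto
  then show ?thesis using I(3) by simp
qed simp

end



lemma sorted_wrt_irrefl_distinct:
  "(\<And>x. \<not> R x x) \<Longrightarrow> sorted_wrt R xs \<Longrightarrow> distinct xs"
  by (induction xs) auto

lemma updown_rank:
  fixes f :: "'a \<Rightarrow> nat"
  assumes "sorted_wrt (\<lambda>a b. f a < f b) (U @ [h])" "sorted_wrt (\<lambda>a b. f b < f a) (h # D)"
  shows "\<exists>j < length (U @ h # D). (\<forall>i. i < j \<longrightarrow> f ((U @ h # D) ! i) < f ((U @ h # D) ! Suc i)) \<and>
          (\<forall>i. j \<le> i \<longrightarrow> Suc i < length (U @ h # D) \<longrightarrow> f ((U @ h # D) ! Suc i) < f ((U @ h # D) ! i))"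
proof (intro exI[of _ "length U"] conjI allI impI)
  show "length U < length (U @ h # D)" by simp
next
  fix i assume i: "i < length U"
  have e: "U @ h # D = (U @ [h]) @ D" by simp
  have "f ((U @ [h]) ! i) < f ((U @ [h]) ! Suc i)" using assms(1) i unfolding sorted_wrt_iff_nth_less by auto
  then show "f ((U @ h # D) ! i) < f ((U @ h # D) ! Suc i)" unfolding e using i by (cases "Suc i < length U") (auto simp: nth_append)
next
  fix i assume i: "length U \<le> i" "Suc i < length (U @ h # D)"
  have al: "\<forall>i j. i < j \<longrightarrow> j < length (h # D) \<longrightarrow> f ((h # D) ! j) < f ((h # D) ! i)"
    using assms(2) unfolding sorted_wrt_iff_nth_less by blast
  have k: "i - length U < Suc (i - length U)" "Suc (i - length U) < length (h # D)" using i by auto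
  have "f ((h # D) ! Suc (i - length U)) < f ((h # D) ! (i - length U))"
    using al k by blast
  then show "f ((U @ h # D) ! Suc i) < f ((U @ h # D) ! i)" using i by (simp add: nth_append Suc_diff_le)
qed

lemma chain_dec:
  fixes f :: "'a \<Rightarrow> nat"
  assumes d: "\<forall>i. j \<le> i \<longrightarrow> Suc i < length p \<longrightarrow> f (p ! Suc i) < f (p ! i)"
  shows "j \<le> i \<Longrightarrow> i < k \<Longrightarrow> k < length p \<Longrightarrow> f (p ! k) < f (p ! i)"
proof (induction k)
  case 0 then show ?case by simp
next
  case (Suc k)
  show ?case
  proof (cases "i = k")
    case True then show ?thesis using Suc.prems d by auto
  next
    case False
    then have "f (p ! k) < f (p ! i)" using Suc.IH Suc.prems by simp
    moreover have "f (p ! Suc k) < f (p ! k)" using Suc.prems False d by simp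
    ultimately show ?thesis by simp
  qed
qed

lemma updown_mid:
  fixes f :: "'a \<Rightarrow> nat"
  assumes "\<exists>j<length p. (\<forall>i. i < j \<longrightarrow> f (p ! i) < f (p ! Suc i)) \<and>
        (\<forall>i. j \<le> i \<longrightarrow> Suc i < length p \<longrightarrow> f (p ! Suc i) < f (p ! i))" "length p \<ge> 3"
  shows "min (f (p ! 0)) (f (p ! (length p - 1))) < f (p ! 1)"
proof -
  obtain j where j: "j < length p" "\<forall>i. i < j \<longrightarrow> f (p ! i) < f (p ! Suc i)"
    "\<forall>i. j \<le> i \<longrightarrow> Suc i < length p \<longrightarrow> f (p ! Suc i) < f (p ! i)" using assms(1) by blast
  show ?thesis
  proof (cases "j = 0")
    case True
    have "f (p ! (length p - 1)) < f (p ! 1)" using chain_dec[OF j(3), of 1 "length p - 1"] True assms(2) by simp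
    then show ?thesis by simp
  next
    case False
    then have "f (p ! 0) < f (p ! 1)" using j(2) by simp
    then show ?thesis by simp
  qed
qed

context cch
begin

lemma custB:
  "a \<in> V \<Longrightarrow> b \<in> V \<Longrightarrow> a \<noteq> b \<Longrightarrow> set I \<subseteq> V \<Longrightarrow> walk E (a # I @ [b]) \<Longrightarrow>
   \<forall>u\<in>set I. rk u < rk a \<and> rk u < rk b \<Longrightarrow> mF {a,b} \<le> ereal (wlen w (a # I @ [b]))"
proof (induction "length I" arbitrary: I a b rule: less_induct)
  case less
  have ab: "{a,b} \<in> S" using starA less.prems by blast
  obtain i x y where i: "i < length L" "L ! i = (x,y)" "{a,b} = {x,y}" using S_index[OF ab] by blast
  show ?case
  proof (cases "I = []")
    case True
    then have "{a,b} \<in> E" using less.prems(5) by simp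
    then have "ms 0 {a,b} = ereal (w {a,b})" by (simp add: ms_0 initial_metric_def)
    moreover have "mF {a,b} \<le> ms 0 {a,b}" by (rule ms_mono) simp_all
    ultimately show ?thesis using True by simp
  next
    case False
    have fin: "finite (rk ` set I)" "rk ` set I \<noteq> {}" using False by auto
    obtain z where z: "z \<in> set I" "rk z = Max (rk ` set I)" using Max_in[OF fin] by auto
    have zmax: "\<forall>u\<in>set I. rk u \<le> rk z" using z(2) fin(1) by simp
    have zV: "z \<in> V" using z less.prems(4) by auto
    have rza: "rk z < rk a" "rk z < rk b" using less.prems(6) z(1) by auto
    have az: "a \<noteq> z" "z \<noteq> b" using rza by auto
    obtain I1 I2 where I1: "I = I1 @ z # I2" "z \<notin> set I1" using split_list_first[OF z(1)] by blast
    obtain K0 K2 where K: "z # I2 = K0 @ z # K2" "z \<notin> set K2" using split_list_last[of z "z # I2"] by auto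
    have e1: "a # I @ [b] = (a # I1) @ z # (I2 @ [b])" using I1 by simp
    have w1: "walk E (a # I1 @ [z])" "walk E (z # I2 @ [b])"
      using less.prems(5) walk_append_Cons[of E "a # I1" z "I2 @ [b]"] e1 by simp_all
    have "(z # I2) @ [b] = (K0 @ z # K2) @ [b]" using K(1) by simp
    then have e2: "z # I2 @ [b] = K0 @ z # (K2 @ [b])" by simp
    have w2: "walk E (z # K2 @ [b])" "walk E (K0 @ [z])"
      using w1(2) e2 walk_append_Cons[of E K0 z "K2 @ [b]"] by simp_all
    have l1: "wlen w (a # I @ [b]) = wlen w (a # I1 @ [z]) + wlen w (z # I2 @ [b])"
      using e1 wlen_append_Cons[of w "a # I1" z "I2 @ [b]"] by simp
    have l2: "wlen w (z # I2 @ [b]) = wlen w (K0 @ [z]) + wlen w (z # K2 @ [b])"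
      by (subst e2) (rule wlen_append_Cons)
    have nn0: "wlen w (K0 @ [z]) \<ge> 0" using walk_wlen_nonneg[OF wpos w2(2)] .
    have K2I: "set K2 \<subseteq> set I"
    proof
      fix u assume u: "u \<in> set K2"
      then have "u \<in> set (z # I2)" using K(1) by simp
      then show "u \<in> set I" using u K(2) I1(1) by auto
    qed
    have "length (z # I2) = length K0 + Suc (length K2)" using K(1) by simp
    then have lenK: "length K2 < length I" using I1(1) by simp
    have lenI1: "length I1 < length I" using I1(1) by simp
    have r1: "\<forall>u\<in>set I1. rk u < rk a \<and> rk u < rk z"
    proof
      fix u assume u: "u \<in> set I1"
      then have uI: "u \<in> set I" using I1 by simp
      have "u \<noteq> z" using u I1(2) by auto
      then have "rk u \<noteq> rk z" using rank_inj[of u z] uI less.prems(4) zV by auto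
      then show "rk u < rk a \<and> rk u < rk z" using zmax uI less.prems(6) by fastforce
    qed
    have r2: "\<forall>u\<in>set K2. rk u < rk z \<and> rk u < rk b"
    proof
      fix u assume u: "u \<in> set K2"
      then have uI: "u \<in> set I" using K2I by auto
      have "u \<noteq> z" using u K(2) by auto
      then have "rk u \<noteq> rk z" using rank_inj[of u z] uI less.prems(4) zV by auto
      then show "rk u < rk z \<and> rk u < rk b" using zmax uI less.prems(6) by fastforce
    qed
    have I1V: "set I1 \<subseteq> V" using I1(1) less.prems(4) by auto
    have K2V: "set K2 \<subseteq> V" using K2I less.prems(4) by auto
    have IH1: "mF {a,z} \<le> ereal (wlen w (a # I1 @ [z]))"
      using less.hyps[OF lenI1 less.prems(1) zV az(1) I1V w1(1) r1] .
    have IH2: "mF {z,b} \<le> ereal (wlen w (z # K2 @ [b]))"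
      using less.hyps[OF lenK zV less.prems(2) az(2) K2V w2(1) r2] .
    have S1: "{a,z} \<in> S" using starA[OF less.prems(1) zV I1V az(1) w1(1) r1] .
    have S2: "{z,b} \<in> S" using starA[OF zV less.prems(2) K2V az(2) w2(1) r2] .
    have xy: "(x = a \<and> y = b) \<or> (x = b \<and> y = a)" using i(3) by (auto simp: doubleton_eq_iff)
    have rz: "rk z < rk x" "rk z < rk y" using xy rza by auto
    have Sxz: "{x,z} \<in> S" "{z,y} \<in> S" using xy S1 S2 by (auto simp: insert_commute)
    have m1: "min (rk x) (rk z) < min (rk x) (rk y)" "min (rk z) (rk y) < min (rk x) (rk y)" using rz by auto
    have mxz: "ms i {x,z} = mF {x,z}" using final_before[OF i(1,2) Sxz(1) m1(1)] .
    have mzy: "ms i {z,y} = mF {z,y}" using final_before[OF i(1,2) Sxz(2) m1(2)] .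
    have tri: "ms (Suc i) {x,y} \<le> ms i {x,z} + ms i {z,y}"
      using ms_Suc[OF i(1)] i(2) cs_tri[OF rz Sxz] by simp
    have sw: "mF {x,z} + mF {z,y} = mF {a,z} + mF {z,b}" using xy by (auto simp: insert_commute add.commute)
    have "mF {a,b} = mF {x,y}" using i(3) by simp
    also have "\<dots> \<le> ms (Suc i) {x,y}" by (rule ms_mono) (use i(1) in auto)
    also have "\<dots> \<le> mF {a,z} + mF {z,b}" using tri mxz mzy sw by simp
    also have "\<dots> \<le> ereal (wlen w (a # I1 @ [z])) + ereal (wlen w (z # K2 @ [b]))"
      using IH1 IH2 by (rule add_mono)
    also have "\<dots> \<le> ereal (wlen w (a # I @ [b]))" using l1 l2 nn0 by simp
    finally show ?thesis .
  qed
qed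

definition gd :: "'a \<Rightarrow> 'a \<Rightarrow> bool" where
  "gd a b \<longleftrightarrow> {a,b} \<in> S \<and> mF {a,b} = ereal (dI a b)"

lemma gd_sym: "gd a b \<Longrightarrow> gd b a"
  unfolding gd_def using dist_sym by (simp add: insert_commute)

lemma UP:
  "path_from_to V E (hd P) (last P) P \<Longrightarrow> wlen w P = dI (hd P) (last P) \<Longrightarrow> \<forall>u\<in>set P. rk u \<le> rk (last P) \<Longrightarrow>
  \<exists>Q. Q \<noteq> [] \<and> hd Q = hd P \<and> last Q = last P \<and> set Q \<subseteq> set P \<and> sorted_wrt (\<lambda>a b. rk a < rk b) Q \<and>
      (\<forall>(a,b)\<in>set (steps Q). gd a b) \<and> mlen mF Q = ereal (wlen w P)"
proof (induction "length P" arbitrary: P rule: less_induct)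
  case less
  have Pp: "P \<noteq> []" "distinct P" "set P \<subseteq> V" "walk E P" using less.prems(1) path_iff by blast+
  define h where "h = last P"
  define P' where "P' = butlast P"
  have Pe: "P = P' @ [h]" using Pp(1) h_def P'_def by simp
  have hl: "last P = h" using h_def by simp
  show ?case
  proof (cases "P' = []")
    case True
    then show ?thesis using Pe by (intro exI[of _ "[h]"]) (auto simp: wlen_def mlen_def)
  next
    case False
    have fin: "finite (rk ` set P')" "rk ` set P' \<noteq> {}" using False by auto
    obtain g where g: "g \<in> set P'" "rk g = Max (rk ` set P')" using Max_in[OF fin] by auto
    have gmax: "\<forall>u\<in>set P'. rk u \<le> rk g" using g(2) fin(1) by simp
    obtain A B' where AB: "P' = A @ g # B'" using split_list[OF g(1)] by blast
    have Pe2: "P = A @ g # (B' @ [h])" using Pe AB by simp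
    have hdA: "hd (A @ [g]) = hd P" using Pe2 by (cases A) auto
    have D3r: "wlen w (A @ [g]) = dI (hd P) g \<and> wlen w (g # B' @ [h]) = dI g h"
    proof -
      have "path_from_to V E (hd P) h (A @ g # B' @ [h])" using less.prems(1) Pe2 hl by simp
      moreover have "wlen w (A @ g # B' @ [h]) = dI (hd P) h" using less.prems(2) Pe2 hl by simp
      ultimately show ?thesis using D3 by blast
    qed
    have dP: "distinct (A @ g # B' @ [h])" using Pp(2) Pe2 by simp
    have gh: "g \<noteq> h" using dP by auto
    have gV: "g \<in> V" "h \<in> V" "set A \<subseteq> V" "set B' \<subseteq> V" using Pp(3) Pe2 by auto
    have rgh0: "rk g \<le> rk h" using less.prems(3) Pe2 hl by simp
    have "rk g \<noteq> rk h" using rank_inj[OF gV(1,2)] gh by blast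
    then have rgh: "rk g < rk h" using rgh0 by simp
    have wAB: "walk E (A @ [g])" "walk E (g # B' @ [h])"
      using Pp(4) Pe2 walk_append_Cons[of E A g "B' @ [h]"] by simp_all
    have pA: "path_from_to V E (hd (A @ [g])) (last (A @ [g])) (A @ [g])"
      unfolding path_iff using wAB dP gV by auto
    have lenA: "length (A @ [g]) < length P" using Pe2 by simp
    have rkA: "\<forall>u\<in>set (A @ [g]). rk u \<le> rk (last (A @ [g]))" using gmax AB by auto
    obtain Q' where Q': "Q' \<noteq> []" "hd Q' = hd (A @ [g])" "last Q' = last (A @ [g])" "set Q' \<subseteq> set (A @ [g])"
      "sorted_wrt (\<lambda>a b. rk a < rk b) Q'" "\<forall>(a,b)\<in>set (steps Q'). gd a b" "mlen mF Q' = ereal (wlen w (A @ [g]))"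
    proof -
      have "wlen w (A @ [g]) = dI (hd (A @ [g])) (last (A @ [g]))" using D3r hdA by simp
      from less.hyps[OF lenA pA this rkA] show ?thesis using that by blast
    qed
    have rB: "\<forall>u\<in>set B'. rk u < rk g \<and> rk u < rk h"
    proof
      fix u assume u: "u \<in> set B'"
      have "u \<noteq> g" using u dP by auto
      then have "rk u \<noteq> rk g" using rank_inj[of u g] u gV by auto
      moreover have "rk u \<le> rk g" using gmax u AB by auto
      ultimately show "rk u < rk g \<and> rk u < rk h" using rgh by simp
    qed
    have Sgh: "{g,h} \<in> S" using starA[OF gV(1,2,4) gh wAB(2) rB] .
    have up: "mF {g,h} \<le> ereal (dI g h)" using custB[OF gV(1,2) gh gV(4) wAB(2) rB] D3r by simp
    have low: "ereal (dI g h) \<le> mF {g,h}" using lower[OF gV(1,2) gh] .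
    have gdgh: "gd g h" unfolding gd_def using Sgh up low by simp
    let ?Q = "Q' @ [h]"
    have lQ': "last Q' = g" using Q'(3) by simp
    have stQ: "steps ?Q = steps Q' @ [(g,h)]" using steps_snoc[OF Q'(1)] lQ' by simp
    have "mlen mF ?Q = mlen mF Q' + mF {g,h}" using mlen_snoc[OF Q'(1)] lQ' by simp
    also have "\<dots> = ereal (wlen w (A @ [g]) + wlen w (g # B' @ [h]))" using Q'(7) up low D3r by simp
    also have "\<dots> = ereal (wlen w P)" using Pe2 wlen_append_Cons[of w A g "B' @ [h]"] by simp
    finally have mQ: "mlen mF ?Q = ereal (wlen w P)" .
    have "\<forall>u\<in>set Q'. rk u < rk h"
    proof
      fix u assume "u \<in> set Q'"
      then have "u \<in> set (A @ [g])" using Q'(4) by blast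
      then have "rk u \<le> rk g" using gmax AB by auto
      then show "rk u < rk h" using rgh by simp
    qed
    then have sQ: "sorted_wrt (\<lambda>a b. rk a < rk b) ?Q"
      unfolding sorted_wrt_append using Q'(5) by simp
    show ?thesis
    proof (intro exI[of _ ?Q] conjI)
      show "hd ?Q = hd P" using Q'(1,2) hdA by simp
      show "last ?Q = last P" using hl by simp
      show "set ?Q \<subseteq> set P" using Q'(4) Pe2 by auto
      show "\<forall>(a,b)\<in>set (steps ?Q). gd a b" using stQ Q'(6) gdgh by auto
      show "?Q \<noteq> []" by simp
      show "sorted_wrt (\<lambda>a b. rk a < rk b) ?Q" by (rule sQ)
      show "mlen mF ?Q = ereal (wlen w P)" by (rule mQ)
    qed
  qed
qed

lemma concat_walk:
  "p \<noteq> [] \<Longrightarrow> set p \<subseteq> V \<Longrightarrow> \<forall>(a,b)\<in>set (steps p). {a,b} \<in> S \<Longrightarrow> mlen mF p \<noteq> \<infinity> \<Longrightarrow>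
  \<exists>W. walk E W \<and> set W \<subseteq> V \<and> W \<noteq> [] \<and> hd W = hd p \<and> last W = last p \<and> set p \<subseteq> set W \<and>
      ereal (wlen w W) = mlen mF p"
proof (induction p rule: induct_list012)
  case 1 then show ?case by simp
next
  case (2 x) then show ?case by (intro exI[of _ "[x]"]) simp
next
  case (3 x y zs)
  have nn0: "\<forall>e. mF e \<ge> 0" using ms_nonneg by simp
  have nn: "mF {x,y} \<ge> 0" "mlen mF (y # zs) \<ge> 0" using nn0 mlen_nonneg[OF nn0] by auto
  have "mF {x,y} + mlen mF (y # zs) \<noteq> \<infinity>" using "3.prems"(4) by simp
  then have f: "mF {x,y} \<noteq> \<infinity>" "mlen mF (y # zs) \<noteq> \<infinity>" using nn by auto
  have Sxy: "{x,y} \<in> S" using "3.prems"(3) by simp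
  then have xyV: "x \<in> V" "y \<in> V" "x \<noteq> y" using star_pairsD by blast+
  obtain I where I: "walk E (x # I @ [y])" "set I \<subseteq> V" "mF {x,y} = ereal (wlen w (x # I @ [y]))"
    using inv[OF le_refl xyV f(1)] unfolding wit_def by blast
  have pr: "y # zs \<noteq> []" "set (y # zs) \<subseteq> V" "\<forall>(a,b)\<in>set (steps (y # zs)). {a,b} \<in> S"
    using "3.prems" by auto
  obtain W' where W': "walk E W'" "set W' \<subseteq> V" "W' \<noteq> []" "hd W' = y" "last W' = last (y # zs)"
    "set (y # zs) \<subseteq> set W'" "ereal (wlen w W') = mlen mF (y # zs)"
    using "3.IH"(2)[OF pr f(2)] by auto
  define T where "T = tl W'"
  have W'e: "W' = y # T" using W'(3,4) T_def by (metis list.collapse)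
  let ?W = "(x # I) @ y # T"
  have "walk E ?W" using I(1) W'(1) W'e walk_append_Cons[of E "x # I" y T] by simp
  moreover have "wlen w ?W = wlen w (x # I @ [y]) + wlen w W'"
    using W'e wlen_append_Cons[of w "x # I" y T] by simp
  moreover have "set ?W \<subseteq> V" using xyV I(2) W'(2) W'e by auto
  moreover have "last ?W = last (x # y # zs)" using W'(5) W'e by simp
  moreover have "set (x # y # zs) \<subseteq> set ?W" using W'(6) W'e by auto
  moreover have "mlen mF (x # y # zs) = ereal (wlen w ?W)"
  proof -
    have "mlen mF (x # y # zs) = mF {x,y} + mlen mF (y # zs)" by simp
    also have "\<dots> = ereal (wlen w (x # I @ [y])) + ereal (wlen w W')" using I(3) W'(7) by simp
    also have "\<dots> = ereal (wlen w ?W)" using W'e wlen_append_Cons[of w "x # I" y T] by simp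
    finally show ?thesis .
  qed
  ultimately show ?case by (intro exI[of _ ?W]) auto
qed

end



context cch
begin

lemma part2:
  assumes xy: "{x,y} \<in> S" "mF {x,y} = ereal (dI x y)"
    and p: "up_down_path V E \<pi> p" "hd p = x" "last p = y" "mlen mF p = ereal (dI x y)"
  shows "p = [x,y]"
proof (rule ccontr)
  assume ne: "p \<noteq> [x,y]"
  have xyV: "x \<in> V" "y \<in> V" "x \<noteq> y" using star_pairsD xy(1) by blast+
  have pp: "p \<noteq> []" "distinct p" "set p \<subseteq> V" "\<forall>(a,b)\<in>set (steps p). {a,b} \<in> S"
    using p(1) unfolding up_down_path_def is_path_def by blast+
  have ud: "\<exists>j<length p. (\<forall>i. i < j \<longrightarrow> rk (p ! i) < rk (p ! Suc i)) \<and>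
        (\<forall>i. j \<le> i \<longrightarrow> Suc i < length p \<longrightarrow> rk (p ! Suc i) < rk (p ! i))"
    using p(1) unfolding up_down_path_def by blast
  have len: "length p \<ge> 3"
  proof -
    consider "p = []" | a where "p = [a]" | a b where "p = [a,b]" | a b c r where "p = a # b # c # r"
      by (metis list.exhaust)
    then show ?thesis
    proof cases
      case 1 then show ?thesis using pp by simp
    next
      case 2 then show ?thesis using p(2,3) xyV by simp
    next
      case 3 then show ?thesis using p(2,3) ne by simp
    next
      case 4 then show ?thesis by simp
    qed
  qed
  have nn0: "\<forall>e. mF e \<ge> 0" using ms_nonneg by simp
  have fin: "mlen mF p \<noteq> \<infinity>" using p(4) by simp
  obtain W where W: "walk E W" "set W \<subseteq> V" "W \<noteq> []" "hd W = hd p" "last W = last p" "set p \<subseteq> set W"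
    "ereal (wlen w W) = mlen mF p" using concat_walk[OF pp(1,3,4) fin] by blast
  have wW: "wlen w W = dI x y" using W(7) p(4) by simp
  have dW: "distinct W" using distW[OF W(1,2,3)] wW W(4,5) p(2,3) by simp
  have pW: "path_from_to V E x y W" unfolding path_iff using W dW p(2,3) by simp
  have "mF {x,y} \<noteq> \<infinity>" using xy(2) by simp
  then obtain I where I: "walk E (x # I @ [y])" "set I \<subseteq> V" "\<forall>u\<in>set I. rk u < rk x \<and> rk u < rk y"
     "mF {x,y} = ereal (wlen w (x # I @ [y]))" using inv[OF le_refl xyV] unfolding wit_def by blast
  let ?W0 = "x # I @ [y]"
  have w0: "wlen w ?W0 = dI x y" using I(4) xy(2) by simp
  have "distinct ?W0" using distW[of ?W0] I(1,2) xyV w0 by simp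
  then have pW0: "path_from_to V E x y ?W0" unfolding path_iff using I(1,2) xyV by simp
  have uq: "\<exists>!q. path_from_to V E x y q \<and> wlen w q = dI x y"
    using usp xyV unfolding unique_shortest_paths_def by blast
  have WW0: "W = ?W0" using uq pW wW pW0 w0 by blast
  have l1: "1 < length p" using len by simp
  have p1: "p ! 1 \<in> set p" using l1 by simp
  have x0: "p ! 0 = x" using p(2) pp(1) by (simp add: hd_conv_nth)
  have yl: "p ! (length p - 1) = y" using p(3) pp(1) by (simp add: last_conv_nth)
  have "p ! 1 \<noteq> p ! 0" using nth_eq_iff_index_eq[OF pp(2), of 1 0] l1 pp(1) by simp
  moreover have "p ! 1 \<noteq> p ! (length p - 1)" using nth_eq_iff_index_eq[OF pp(2), of 1 "length p - 1"] l1 len by simp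
  ultimately have "p ! 1 \<in> set I" using p1 W(6) WW0 x0 yl by auto
  then have "rk (p ! 1) < rk x \<and> rk (p ! 1) < rk y" using I(3) by blast
  moreover have "min (rk (p ! 0)) (rk (p ! (length p - 1))) < rk (p ! 1)" using updown_mid[OF ud len] .
  ultimately show False using x0 yl by (simp add: min_less_iff_disj)
qed

lemma part1:
  assumes sV: "s \<in> V" and tV: "t \<in> V"
  shows "\<exists>p. up_down_path V E \<pi> p \<and> hd p = s \<and> last p = t \<and> (\<forall>(a,b)\<in>set (steps p). gd a b)
     \<and> mlen mF p = ereal (dI s t)"
proof -
  obtain P where P: "path_from_to V E s t P" "wlen w P = dI s t" using exists_sp sV tV by blast
  have Pp: "P \<noteq> []" "distinct P" "set P \<subseteq> V" "walk E P" "hd P = s" "last P = t" using P(1) path_iff by blast+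
  have fin: "finite (rk ` set P)" "rk ` set P \<noteq> {}" using Pp(1) by auto
  obtain h where h: "h \<in> set P" "rk h = Max (rk ` set P)" using Max_in[OF fin] by auto
  have hmax: "\<forall>u\<in>set P. rk u \<le> rk h" using h(2) fin(1) by simp
  obtain A B where AB: "P = A @ h # B" using split_list[OF h(1)] by blast
  have D3r: "wlen w (A @ [h]) = dI s h \<and> wlen w (h # B) = dI h t" using D3[of s t A h B] P AB by simp
  have dP: "distinct (A @ h # B)" using Pp(2) AB by simp
  have hV: "h \<in> V" "set A \<subseteq> V" "set B \<subseteq> V" using Pp(3) AB by auto
  have wAB: "walk E (A @ [h])" "walk E (h # B)" using Pp(4) AB walk_append_Cons[of E A h B] by simp_all
  have hs: "hd (A @ [h]) = s" using Pp(5) AB by (cases A) auto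
  have lt: "last (h # B) = t" using Pp(6) AB by simp
  have pA: "path_from_to V E (hd (A @ [h])) (last (A @ [h])) (A @ [h])"
    unfolding path_iff using wAB dP hV by auto
  have wA: "wlen w (A @ [h]) = dI (hd (A @ [h])) (last (A @ [h]))" using D3r hs by simp
  have rA: "\<forall>u\<in>set (A @ [h]). rk u \<le> rk (last (A @ [h]))" using hmax AB by auto
  obtain Q1 where Q1: "Q1 \<noteq> []" "hd Q1 = hd (A @ [h])" "last Q1 = last (A @ [h])" "set Q1 \<subseteq> set (A @ [h])"
      "sorted_wrt (\<lambda>a b. rk a < rk b) Q1" "\<forall>(a,b)\<in>set (steps Q1). gd a b" "mlen mF Q1 = ereal (wlen w (A @ [h]))"
    using UP[OF pA wA rA] by blast
  let ?P2 = "rev B @ [h]"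
  have hP2: "hd ?P2 = t" using lt by (cases "B = []") (simp_all add: hd_append hd_rev)
  have pB: "path_from_to V E h t (h # B)" unfolding path_iff using wAB dP hV lt by auto
  have pB2: "path_from_to V E (hd ?P2) (last ?P2) ?P2"
    using path_rev[OF pB] hP2 by simp
  have wB: "wlen w ?P2 = dI (hd ?P2) (last ?P2)"
  proof -
    have "wlen w ?P2 = wlen w (h # B)" using wlen_rev[of w "h # B"] by simp
    also have "\<dots> = dI h t" using D3r by simp
    also have "\<dots> = dI t h" by (rule dist_sym)
    finally show ?thesis using hP2 by simp
  qed
  have rB: "\<forall>u\<in>set ?P2. rk u \<le> rk (last ?P2)" using hmax AB by auto
  obtain Q2 where Q2: "Q2 \<noteq> []" "hd Q2 = hd ?P2" "last Q2 = last ?P2" "set Q2 \<subseteq> set ?P2"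
      "sorted_wrt (\<lambda>a b. rk a < rk b) Q2" "\<forall>(a,b)\<in>set (steps Q2). gd a b" "mlen mF Q2 = ereal (wlen w ?P2)"
    using UP[OF pB2 wB rB] by blast
  define U where "U = butlast Q1"
  have Q1e: "Q1 = U @ [h]" using append_butlast_last_id[OF Q1(1)] Q1(3) U_def by simp
  define D where "D = tl (rev Q2)"
  have r2: "rev Q2 \<noteq> []" "hd (rev Q2) = h" using Q2(1,3) by (simp_all add: hd_rev)
  have Q2e: "rev Q2 = h # D" using list.collapse[OF r2(1)] r2(2) D_def by simp
  let ?p = "U @ h # D"
  have dQ1: "distinct (U @ [h])" using sorted_wrt_irrefl_distinct[OF _ Q1(5)] Q1e by simp
  have "distinct Q2" using sorted_wrt_irrefl_distinct[OF _ Q2(5)] by simp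
  then have dQ2: "distinct (h # D)" using Q2e distinct_rev[of Q2] by simp
  have sU: "set U \<subseteq> set A" using Q1(4) Q1e dQ1 by auto
  have sD: "set D \<subseteq> set B"
  proof -
    have "set (h # D) \<subseteq> set ?P2" using Q2(4) Q2e set_rev[of Q2] by simp
    then show ?thesis using dQ2 by auto
  qed
  have dp: "distinct ?p" using dQ1 dQ2 sU sD dP by auto
  have setp: "set ?p \<subseteq> V" using sU sD hV by auto
  have stp: "steps ?p = steps (U @ [h]) @ steps (h # D)" by (rule steps_append_Cons)
  have st2: "steps (h # D) = rev (map prod.swap (steps Q2))" using Q2e steps_rev[of Q2] by simp
  have gdp: "\<forall>(a,b)\<in>set (steps ?p). gd a b"
  proof
    fix ab assume "ab \<in> set (steps ?p)"
    then consider "ab \<in> set (steps Q1)" | "ab \<in> prod.swap ` set (steps Q2)" using stp st2 Q1e by auto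
    then show "case ab of (a, b) \<Rightarrow> gd a b"
    proof cases
      case 1 then show ?thesis using Q1(6) by blast
    next
      case 2 then show ?thesis using Q2(6) gd_sym by auto
    qed
  qed
  have Sp: "\<forall>(a,b)\<in>set (steps ?p). {a,b} \<in> S" using gdp unfolding gd_def by auto
  have srt2: "sorted_wrt (\<lambda>a b. rk b < rk a) (h # D)"
    using Q2(5) Q2e sorted_wrt_rev[of "\<lambda>a b. rk b < rk a" Q2] by simp
  have srt1: "sorted_wrt (\<lambda>a b. rk a < rk b) (U @ [h])" using Q1(5) Q1e by simp
  have ud: "up_down_path V E \<pi> ?p"
    unfolding up_down_path_def is_path_def
  proof (intro conjI)
    show "?p \<noteq> []" by simp
  qed (use dp setp Sp updown_rank[OF srt1 srt2] in blast)+
  have hdp: "hd ?p = s" using Q1(2) Q1e hs by (cases U) auto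
  have ltp: "last ?p = t"
  proof -
    have "last (h # D) = last (rev Q2)" using Q2e by simp
    also have "\<dots> = hd Q2" using Q2(1) by (simp add: last_rev)
    also have "\<dots> = t" using Q2(2) hP2 by simp
    finally show ?thesis by simp
  qed
  have "mlen mF ?p = mlen mF (U @ [h]) + mlen mF (h # D)" by (rule mlen_append_Cons)
  also have "\<dots> = mlen mF Q1 + mlen mF Q2" using Q1e Q2e mlen_rev[of mF Q2] by simp
  also have "\<dots> = ereal (wlen w (A @ [h]) + wlen w (h # B))" using Q1(7) Q2(7) wlen_rev[of w "h # B"] by simp
  also have "\<dots> = ereal (dI s t)" using AB P(2) wlen_append_Cons[of w A h B] by simp
  finally show ?thesis using ud hdp ltp gdp by blast
qed

end

theorem mainTheorem7:
  fixes V :: "'a set" and E :: "'a set set" and w :: "'a set \<Rightarrow> real"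
    and \<pi> :: "nat \<Rightarrow> 'a" and L :: "('a \<times> 'a) list"
  assumes "simple_graph V E"
    and "connected_graph V E"
    and "\<forall>e\<in>E. w e > 0"
    and "unique_shortest_paths V E w"
    and "vertex_order V \<pi>"
    and "cust_order V E \<pi> L"
  defines "mC \<equiv> basic_customization V E \<pi> L (initial_metric E w)"
  defines "R \<equiv> wrong_edges V E w \<pi> mC"
  shows "(\<forall>s\<in>V. \<forall>t\<in>V. \<exists>p. up_down_path V E \<pi> p \<and> hd p = s \<and> last p = t \<and>
             (\<forall>(a, b)\<in>set (steps p). {a, b} \<notin> R) \<and>
             mlen mC p = ereal (dist_I V E w s t))
       \<and> (\<forall>x y. {x, y} \<in> star_edges V E \<pi> \<and> {x, y} \<notin> R \<longrightarrow>
             (\<forall>p. up_down_path V E \<pi> p \<and> hd p = x \<and> last p = y \<and>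
                  mlen mC p = ereal (dist_I V E w x y) \<longrightarrow> p = [x, y]))"
proof -
  interpret c: cch V E w \<pi> L using assms(1,3,4,5,6) by unfold_locales
  have mCe: "mC = c.ms (length L)" unfolding mC_def c.ms_def by simp
  have gdR: "\<And>a b. c.gd a b \<Longrightarrow> {a,b} \<notin> R"
  proof
    fix a b assume g: "c.gd a b" "{a,b} \<in> R"
    then obtain x y where xy: "{a,b} = {x,y}" "ereal (dist_I V E w x y) \<noteq> mC {x,y}"
      unfolding R_def wrong_edges_def by blast
    have "dist_I V E w x y = dist_I V E w a b" using xy(1) c.dist_sym by (auto simp: doubleton_eq_iff)
    then show False using g(1) xy mCe unfolding c.gd_def by simp
  qed
  show ?thesis
  proof (intro conjI ballI allI impI)
    fix s t assume st: "s \<in> V" "t \<in> V"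
    obtain p where p: "up_down_path V E \<pi> p" "hd p = s" "last p = t" "\<forall>(a,b)\<in>set (steps p). c.gd a b"
      "mlen (c.ms (length L)) p = ereal (dist_I V E w s t)" using c.part1[OF st] by blast
    have "\<forall>(a,b)\<in>set (steps p). {a,b} \<notin> R" using p(4) gdR by auto
    then show "\<exists>p. up_down_path V E \<pi> p \<and> hd p = s \<and> last p = t \<and>
             (\<forall>(a, b)\<in>set (steps p). {a, b} \<notin> R) \<and> mlen mC p = ereal (dist_I V E w s t)"
      using p mCe by blast
  next
    fix x y p
    assume h: "{x, y} \<in> star_edges V E \<pi> \<and> {x, y} \<notin> R"
      and hp: "up_down_path V E \<pi> p \<and> hd p = x \<and> last p = y \<and> mlen mC p = ereal (dist_I V E w x y)"
    have "mC {x,y} = ereal (dist_I V E w x y)"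
    proof (rule ccontr)
      assume "mC {x,y} \<noteq> ereal (dist_I V E w x y)"
      then have "{x,y} \<in> R" using h unfolding R_def wrong_edges_def by auto
      then show False using h by simp
    qed
    then show "p = [x,y]" using c.part2[of x y p] h hp mCe by simp
  qed
qed



end
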